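(* In the polar Brauer category $\mathcal{AB}(\delta)$ (over a commutative ring $K$, $\delta\in K$), the identity $[\mathbb H_{01}+\mathbb H_{02},\mathbb H_{12}]=0$ holds in $\mathrm{End}_{\mathcal{AB}(\delta)}(2)$.
   Context: Let $K$ be a commutative ring and $\delta\in K$. The Brauer category $\mathcal B(\delta)$ has objects $\mathbb N$; $\mathrm{Hom}_{\mathcal B(\delta)}(r,s)$ is the free $K$-module on Brauer $(r,s)$-diagrams; composition $BA$ (first $A$, then $B$) is stacking with closed loops replaced by a factor $\delta$; $\otimes$ is juxtaposition. $I$ is the identity of $1$, $I_r=I^{\otimes r}$, $X$ the crossing, $\cap:2\to0$ the cap, $\cup:0\to2$ the cup, $H=X-\cup\circ\cap$. The polar Brauer category $\mathcal{AB}(\delta)$ is the $K$-linear category with objects $\mathbb N$ generated, under composition and the right action $\mathbb D\mapsto\mathbb D\otimes B$ of morphisms $B$ of $\mathcal B(\delta)$ (juxtaposing $B$ on the right; $\mathbb D:r\to s$, $B:k\to\ell$ give $\mathbb D\otimes B:r+k\to s+\ell$), by $\mathbb I_0$ (a vertical pole, identity of $0$) and $\mathbb H:1\to1$ (pole joined by a horizontal connector to one thin strand), subject to: (i) $(\mathbb I_0\otimes B)(\mathbb I_0\otimes A)=\mathbb I_0\otimes BA$, $(\mathbb H\otimes B)(\mathbb I_1\otimes A)=(\mathbb I_1\otimes B)(\mathbb H\otimes A)=\mathbb H\otimes BA$, with $\mathbb I_r=\mathbb I_0\otimes I_r$; (ii) $[\mathbb H_{01},\mathbb H_{02}+\mathbb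 H_{12}]=0$ with $[a,b]=ab-ba$, $\mathbb H_{01}=\mathbb H\otimes I$, $\mathbb X_0=\mathbb I_0\otimes X$, $\mathbb H_{02}=\mathbb X_0\mathbb H_{01}\mathbb X_0$, $\mathbb H_{12}=\mathbb I_0\otimes H$; (iii) $\mathbb H^T=-\mathbb H$ where $\mathbb D^T=(\mathbb I_0\otimes\cap\otimes I)(\mathbb D\otimes X)(\mathbb I_0\otimes\cup\otimes I)$ for $\mathbb D:1\to1$; relations are imposed in all composites and right tensor products. Products of morphisms denote composition. *)

theory Defs
  imports Main "HOL.Modules"
begin

text \<open>Points of an (r,s)-diagram: Inl i is the i-th source (bottom) point (i < r),
  Inr j is the j-th target (top) point (j < s), numbered from left to right.
  A diagram is stored as a symmetric edge relation (a perfect matching).\<close>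

type_synonym bpt = "nat + nat"

datatype bdiag = BDiag (bsrc: nat) (btgt: nat) (bedges: "(bpt \<times> bpt) set")

definition bpoints :: "nat \<Rightarrow> nat \<Rightarrow> bpt set" where
  "bpoints r s = Inl ` {..<r} \<union> Inr ` {..<s}"

definition is_brauer :: "bdiag \<Rightarrow> bool" where
  "is_brauer d \<longleftrightarrow>
     bedges d \<subseteq> bpoints (bsrc d) (btgt d) \<times> bpoints (bsrc d) (btgt d) \<and>
     (\<forall>p q. (p, q) \<in> bedges d \<longrightarrow> (q, p) \<in> bedges d) \<and>
     (\<forall>p. (p, p) \<notin> bedges d) \<and>
     (\<forall>p \<in> bpoints (bsrc d) (btgt d). \<exists>!q. (p, q) \<in> bedges d)"

text \<open>Stacking B on top of A (first A, then B).\<close>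

datatype pt3 = Bot nat | Mid nat | Top nat

definition lower_pt :: "bpt \<Rightarrow> pt3" where
  "lower_pt p = (case p of Inl i \<Rightarrow> Bot i | Inr j \<Rightarrow> Mid j)"

definition upper_pt :: "bpt \<Rightarrow> pt3" where
  "upper_pt p = (case p of Inl j \<Rightarrow> Mid j | Inr k \<Rightarrow> Top k)"

definition outer_pt :: "bpt \<Rightarrow> pt3" where
  "outer_pt p = (case p of Inl i \<Rightarrow> Bot i | Inr k \<Rightarrow> Top k)"

definition stack_conn :: "bdiag \<Rightarrow> bdiag \<Rightarrow> (pt3 \<times> pt3) set" where
  "stack_conn B A =
     (map_prod lower_pt lower_pt ` bedges A \<union> map_prod upper_pt upper_pt ` bedges B)\<^sup>*"

definition brauer_comp :: "bdiag \<Rightarrow> bdiag \<Rightarrow> bdiag" where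
  "brauer_comp B A = BDiag (bsrc A) (btgt B)
     {(p, q). p \<in> bpoints (bsrc A) (btgt B) \<and> q \<in> bpoints (bsrc A) (btgt B) \<and> p \<noteq> q \<and>
              (outer_pt p, outer_pt q) \<in> stack_conn B A}"

definition brauer_loops :: "bdiag \<Rightarrow> bdiag \<Rightarrow> nat" where
  "brauer_loops B A = card {stack_conn B A `` {Mid j} | j.
      j < btgt A \<and> stack_conn B A `` {Mid j} \<subseteq> range Mid}"

definition shift_pt :: "nat \<Rightarrow> nat \<Rightarrow> bpt \<Rightarrow> bpt" where
  "shift_pt a b p = (case p of Inl i \<Rightarrow> Inl (a + i) | Inr j \<Rightarrow> Inr (b + j))"

definition brauer_tensor :: "bdiag \<Rightarrow> bdiag \<Rightarrow> bdiag" where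
  "brauer_tensor d1 d2 = BDiag (bsrc d1 + bsrc d2) (btgt d1 + btgt d2)
     (bedges d1 \<union> map_prod (shift_pt (bsrc d1) (btgt d1)) (shift_pt (bsrc d1) (btgt d1)) ` bedges d2)"

definition bI :: bdiag where
  "bI = BDiag 1 1 {(Inl 0, Inr 0), (Inr 0, Inl 0)}"

definition bX :: bdiag where
  "bX = BDiag 2 2 {(Inl 0, Inr 1), (Inr 1, Inl 0), (Inl 1, Inr 0), (Inr 0, Inl 1)}"

definition bcap :: bdiag where
  "bcap = BDiag 2 0 {(Inl 0, Inl 1), (Inl 1, Inl 0)}"

definition bcup :: bdiag where
  "bcup = BDiag 0 2 {(Inr 0, Inr 1), (Inr 1, Inr 0)}"

fun bId :: "nat \<Rightarrow> bdiag" where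
  "bId 0 = BDiag 0 0 {}"
| "bId (Suc n) = brauer_tensor (bId n) bI"

text \<open>
  A model of the presentation of AB(delta): a K-module M (think of the direct sum of all
  Hom-spaces, composition extended by zero on non-composable pairs), with an associative
  K-bilinear composition cmp b a (= "first a, then b"), a right action
  act D B (= D \<otimes> B) of Brauer diagrams, K-linear in D and associative,
  and elements I0 (the pole), H (the generator \<bbbH>), subject to relations (i)-(iii).
  The action of a linear combination of diagrams is the linear extension; relations are
  stated on diagrams (equivalent by linearity).  An identity holds in AB(delta) iff it holds
  in every such model.\<close>

definition pb_Ir :: "('m \<Rightarrow> bdiag \<Rightarrow> 'm) \<Rightarrow> 'm \<Rightarrow> nat \<Rightarrow> 'm" where
  "pb_Ir act I0 r = act I0 (bId r)"

definition pb_X0 :: "('m \<Rightarrow> bdiag \<Rightarrow> 'm) \<Rightarrow> 'm \<Rightarrow> 'm" where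
  "pb_X0 act I0 = act I0 bX"

definition pb_H01 :: "('m \<Rightarrow> bdiag \<Rightarrow> 'm) \<Rightarrow> 'm \<Rightarrow> 'm" where
  "pb_H01 act H = act H bI"

definition pb_H02 :: "('m \<Rightarrow> 'm \<Rightarrow> 'm) \<Rightarrow> ('m \<Rightarrow> bdiag \<Rightarrow> 'm) \<Rightarrow> 'm \<Rightarrow> 'm \<Rightarrow> 'm" where
  "pb_H02 cmp act I0 H = cmp (cmp (pb_X0 act I0) (pb_H01 act H)) (pb_X0 act I0)"

text \<open>H12 = I0 \<otimes> H with H = X - cup\<circ>cap in B(delta); cup\<circ>cap = delta^(loops) (diagram).\<close>
definition pb_H12 :: "'k::comm_ring_1 \<Rightarrow> ('k \<Rightarrow> 'm::ab_group_add \<Rightarrow> 'm) \<Rightarrow>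
    ('m \<Rightarrow> bdiag \<Rightarrow> 'm) \<Rightarrow> 'm \<Rightarrow> 'm" where
  "pb_H12 \<delta> smul act I0 =
     act I0 bX - smul (\<delta> ^ brauer_loops bcup bcap) (act I0 (brauer_comp bcup bcap))"

definition pb_transp :: "('m \<Rightarrow> 'm \<Rightarrow> 'm) \<Rightarrow> ('m \<Rightarrow> bdiag \<Rightarrow> 'm) \<Rightarrow> 'm \<Rightarrow> 'm \<Rightarrow> 'm" where
  "pb_transp cmp act I0 D =
     cmp (cmp (act I0 (brauer_tensor bcap bI)) (act D bX)) (act I0 (brauer_tensor bcup bI))"

definition commutator :: "('m::ab_group_add \<Rightarrow> 'm \<Rightarrow> 'm) \<Rightarrow> 'm \<Rightarrow> 'm \<Rightarrow> 'm" where
  "commutator cmp a b = cmp a b - cmp b a"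

definition polar_brauer_model ::
  "'k::comm_ring_1 \<Rightarrow> ('k \<Rightarrow> 'm::ab_group_add \<Rightarrow> 'm) \<Rightarrow> ('m \<Rightarrow> 'm \<Rightarrow> 'm) \<Rightarrow>
   ('m \<Rightarrow> bdiag \<Rightarrow> 'm) \<Rightarrow> 'm \<Rightarrow> 'm \<Rightarrow> bool" where
  "polar_brauer_model \<delta> smul cmp act I0 H \<longleftrightarrow>
     \<comment> \<open>K-linear structure\<close>
     module smul \<and>
     (\<forall>x y z. cmp (cmp x y) z = cmp x (cmp y z)) \<and>
     (\<forall>x y z. cmp (x + y) z = cmp x z + cmp y z) \<and>
     (\<forall>x y z. cmp x (y + z) = cmp x y + cmp x z) \<and>
     (\<forall>c x y. cmp (smul c x) y = smul c (cmp x y)) \<and>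
     (\<forall>c x y. cmp x (smul c y) = smul c (cmp x y)) \<and>
     \<comment> \<open>right action of B(delta)\<close>
     (\<forall>x y B. act (x + y) B = act x B + act y B) \<and>
     (\<forall>c x B. act (smul c x) B = smul c (act x B)) \<and>
     (\<forall>x B C. is_brauer B \<longrightarrow> is_brauer C \<longrightarrow>
         act (act x B) C = act x (brauer_tensor B C)) \<and>
     \<comment> \<open>relation (i)\<close>
     (\<forall>A B. is_brauer A \<longrightarrow> is_brauer B \<longrightarrow> btgt A = bsrc B \<longrightarrow>
         cmp (act I0 B) (act I0 A) = smul (\<delta> ^ brauer_loops B A) (act I0 (brauer_comp B A)) \<and>
         cmp (act H B) (act (pb_Ir act I0 1) A) = smul (\<delta> ^ brauer_loops B A) (act H (brauer_comp B A)) \<and>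
         cmp (act (pb_Ir act I0 1) B) (act H A) = smul (\<delta> ^ brauer_loops B A) (act H (brauer_comp B A))) \<and>
     \<comment> \<open>relation (ii)\<close>
     commutator cmp (pb_H01 act H) (pb_H02 cmp act I0 H + pb_H12 \<delta> smul act I0) = 0 \<and>
     \<comment> \<open>relation (iii)\<close>
     pb_transp cmp act I0 H = - H"

end

theory Submission
  imports Defs
begin


lemma rtr_eq:
  assumes "\<And>a b c. (a,b) \<in> T \<Longrightarrow> (b,c) \<in> S \<Longrightarrow> (a,c) \<in> T"
    and "Id \<subseteq> T" and "T \<subseteq> S\<^sup>*"
  shows "S\<^sup>* = T"
proof
  show "S\<^sup>* \<subseteq> T"
  proof
    fix x assume "x \<in> S\<^sup>*"
    then obtain a c where x: "x = (a,c)" and ac: "(a,c) \<in> S\<^sup>*" by (cases x) auto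
    from ac have "(a,c) \<in> T"
      by (induction rule: rtrancl_induct) (use assms in auto)
    then show "x \<in> T" using x by simp
  qed
qed (use assms in auto)

lemma block_sub:
  assumes "\<forall>x\<in>b. (x,m) \<in> S\<^sup>* \<and> (m,x) \<in> S\<^sup>*"
  shows "b \<times> b \<subseteq> S\<^sup>*"
  using assms by (auto intro: rtrancl_trans)

lemma r1: "(x,y) \<in> S \<Longrightarrow> (x,y) \<in> S\<^sup>*" by auto
lemma r2: "(x,y) \<in> S \<Longrightarrow> (y,z) \<in> S \<Longrightarrow> (x,z) \<in> S\<^sup>*" by auto


definition bE :: bdiag where "bE = BDiag 2 2 {(Inl 0, Inl 1), (Inl 1, Inl 0), (Inr 0, Inr 1), (Inr 1, Inr 0)}"
definition bI2 :: bdiag where "bI2 = BDiag 2 2 {(Inl 0, Inr 0), (Inr 0, Inl 0), (Inl 1, Inr 1), (Inr 1, Inl 1)}"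

lemma bp22: "bpoints 2 2 = {Inl 0, Inl 1, Inr 0, Inr 1}"
  by (auto simp: bpoints_def numeral_2_eq_2 lessThan_Suc)
lemma bp11: "bpoints 1 1 = {Inl 0, Inr 0}" "bpoints (Suc 0) (Suc 0) = {Inl 0, Inr 0}"
  by (auto simp: bpoints_def lessThan_Suc)

lemma tII: "brauer_tensor bI bI = bI2"
  by (auto simp: brauer_tensor_def bI_def bI2_def shift_pt_def)

lemma bId1: "bId 1 = bI"
  by (auto simp: brauer_tensor_def bI_def shift_pt_def)

lemma br_I: "is_brauer bI" by (auto simp: is_brauer_def bI_def bp11)
lemma br_I2: "is_brauer bI2" by (auto simp: is_brauer_def bI2_def bp22)
lemma br_X: "is_brauer bX" by (auto simp: is_brauer_def bX_def bp22)
lemma br_E: "is_brauer bE" by (auto simp: is_brauer_def bE_def bp22)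

lemma loops0:
  assumes "\<forall>j<btgt A. \<exists>x. (Mid j, x) \<in> stack_conn B A \<and> x \<notin> range Mid"
  shows "brauer_loops B A = 0"
proof -
  have "{stack_conn B A `` {Mid j} | j. j < btgt A \<and> stack_conn B A `` {Mid j} \<subseteq> range Mid} = {}"
    using assms by blast
  then show ?thesis unfolding brauer_loops_def by simp
qed


lemma rtr_lab:
  assumes "\<forall>(b,c)\<in>S. lab b = lab c \<and> lab b \<noteq> (0::nat)"
    and "\<forall>x. lab x \<noteq> 0 \<longrightarrow> (x, cen (lab x)) \<in> S\<^sup>* \<and> (cen (lab x), x) \<in> S\<^sup>*"
  shows "S\<^sup>* = {(x,y). x = y \<or> (lab x = lab y \<and> lab x \<noteq> 0)}"
proof (rule rtr_eq)
  show "\<And>a b c. (a, b) \<in> {(x,y). x = y \<or> (lab x = lab y \<and> lab x \<noteq> 0)} \<Longrightarrow> (b, c) \<in> S \<Longrightarrow>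
      (a, c) \<in> {(x,y). x = y \<or> (lab x = lab y \<and> lab x \<noteq> 0)}"
    using assms(1) by fastforce
  show "Id \<subseteq> {(x,y). x = y \<or> (lab x = lab y \<and> lab x \<noteq> 0)}" by auto
  show "{(x,y). x = y \<or> (lab x = lab y \<and> lab x \<noteq> 0)} \<subseteq> S\<^sup>*"
  proof clarify
    fix x y assume "x = y \<or> (lab x = lab y \<and> lab x \<noteq> 0)"
    then show "(x,y) \<in> S\<^sup>*"
    proof
      assume h: "lab x = lab y \<and> lab x \<noteq> 0"
      have a: "(x, cen (lab x)) \<in> S\<^sup>*" using assms(2) h by blast
      have b: "(cen (lab y), y) \<in> S\<^sup>*" using assms(2) h by metis
      show ?thesis using a b h by (metis rtrancl_trans)
    qed auto
  qed
qed

lemma scXX: "stack_conn bX bX = {(x,y). x = y \<or> ((\<lambda>x. if x \<in> {Bot 0, Mid 1, Top 0} then 1 else if x \<in> {Bot 1, Mid 0, Top 1} then 2 else 0::nat) x = (\<lambda>x. if x \<in> {Bot 0, Mid 1, Top 0} then 1 else if x \<in> {Bot 1, Mid 0, Top 1} then 2 else 0::nat) y \<and> (\<lambda>x. if x \<in> {Bot 0, Mid 1, Top 0} then 1 else if x \<in> {Bot 1, Mid 0, Top 1} then 2 else 0::nat) x \<noteq> 0)}"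
  unfolding stack_conn_def
  apply (rule rtr_lab[where cen="\<lambda>k. if k = 1 then Mid 1 else Mid 0"])
  subgoal by (simp add: bX_def lower_pt_def upper_pt_def)
  subgoal by (simp add: bX_def lower_pt_def upper_pt_def) (blast intro: r1 r2)
  done

lemma scII: "stack_conn bI bI = {(x,y). x = y \<or> ((\<lambda>x. if x \<in> {Bot 0, Mid 0, Top 0} then 1 else 0::nat) x = (\<lambda>x. if x \<in> {Bot 0, Mid 0, Top 0} then 1 else 0::nat) y \<and> (\<lambda>x. if x \<in> {Bot 0, Mid 0, Top 0} then 1 else 0::nat) x \<noteq> 0)}"
  unfolding stack_conn_def
  apply (rule rtr_lab[where cen="\<lambda>k. Mid 0"])
  subgoal by (simp add: bI_def lower_pt_def upper_pt_def)
  subgoal by (simp add: bI_def lower_pt_def upper_pt_def) (blast intro: r1 r2)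
  done

lemma scI2X: "stack_conn bI2 bX = {(x,y). x = y \<or> ((\<lambda>x. if x \<in> {Bot 0, Mid 1, Top 1} then 1 else if x \<in> {Bot 1, Mid 0, Top 0} then 2 else 0::nat) x = (\<lambda>x. if x \<in> {Bot 0, Mid 1, Top 1} then 1 else if x \<in> {Bot 1, Mid 0, Top 0} then 2 else 0::nat) y \<and> (\<lambda>x. if x \<in> {Bot 0, Mid 1, Top 1} then 1 else if x \<in> {Bot 1, Mid 0, Top 0} then 2 else 0::nat) x \<noteq> 0)}"
  unfolding stack_conn_def
  apply (rule rtr_lab[where cen="\<lambda>k. if k = 1 then Mid 1 else Mid 0"])
  subgoal by (simp add: bX_def bI2_def lower_pt_def upper_pt_def)
  subgoal by (simp add: bX_def bI2_def lower_pt_def upper_pt_def) (blast intro: r1 r2)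
  done

lemma scXE: "stack_conn bX bE = {(x,y). x = y \<or> ((\<lambda>x. if x \<in> {Bot 0, Bot 1} then 1 else if x \<in> {Mid 0, Mid 1, Top 0, Top 1} then 2 else 0::nat) x = (\<lambda>x. if x \<in> {Bot 0, Bot 1} then 1 else if x \<in> {Mid 0, Mid 1, Top 0, Top 1} then 2 else 0::nat) y \<and> (\<lambda>x. if x \<in> {Bot 0, Bot 1} then 1 else if x \<in> {Mid 0, Mid 1, Top 0, Top 1} then 2 else 0::nat) x \<noteq> 0)}"
  unfolding stack_conn_def
  apply (rule rtr_lab[where cen="\<lambda>k. if k = 1 then Bot 0 else Mid 0"])
  subgoal by (simp add: bX_def bE_def lower_pt_def upper_pt_def)
  subgoal by (simp add: bX_def bE_def lower_pt_def upper_pt_def) (blast intro: r1 r2)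
  done

lemma scEX: "stack_conn bE bX = {(x,y). x = y \<or> ((\<lambda>x. if x \<in> {Bot 0, Bot 1, Mid 0, Mid 1} then 1 else if x \<in> {Top 0, Top 1} then 2 else 0::nat) x = (\<lambda>x. if x \<in> {Bot 0, Bot 1, Mid 0, Mid 1} then 1 else if x \<in> {Top 0, Top 1} then 2 else 0::nat) y \<and> (\<lambda>x. if x \<in> {Bot 0, Bot 1, Mid 0, Mid 1} then 1 else if x \<in> {Top 0, Top 1} then 2 else 0::nat) x \<noteq> 0)}"
  unfolding stack_conn_def
  apply (rule rtr_lab[where cen="\<lambda>k. if k = 1 then Mid 0 else Top 0"])
  subgoal by (simp add: bX_def bE_def lower_pt_def upper_pt_def)
  subgoal by (simp add: bX_def bE_def lower_pt_def upper_pt_def) (blast intro: r1 r2)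
  done

lemma sccc: "stack_conn bcup bcap = {(x,y). x = y \<or> ((\<lambda>x. if x \<in> {Bot 0, Bot 1} then 1 else if x \<in> {Top 0, Top 1} then 2 else 0::nat) x = (\<lambda>x. if x \<in> {Bot 0, Bot 1} then 1 else if x \<in> {Top 0, Top 1} then 2 else 0::nat) y \<and> (\<lambda>x. if x \<in> {Bot 0, Bot 1} then 1 else if x \<in> {Top 0, Top 1} then 2 else 0::nat) x \<noteq> 0)}"
  unfolding stack_conn_def
  apply (rule rtr_lab[where cen="\<lambda>k. if k = 1 then Bot 0 else Top 0"])
  subgoal by (simp add: bcup_def bcap_def lower_pt_def upper_pt_def)
  subgoal by (simp add: bcup_def bcap_def lower_pt_def upper_pt_def) (blast intro: r1 r2)
  done

lemma comp_intro:
  assumes "D = BDiag r s Ed" "bsrc A = r" "btgt B = s" "bpoints r s = P"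
    and "\<And>p q. p \<in> P \<Longrightarrow> q \<in> P \<Longrightarrow> p \<noteq> q \<Longrightarrow> ((outer_pt p, outer_pt q) \<in> stack_conn B A \<longleftrightarrow> (p,q) \<in> Ed)"
    and "Ed \<subseteq> P \<times> P" and "\<forall>p. (p,p) \<notin> Ed"
  shows "brauer_comp B A = D"
  unfolding brauer_comp_def using assms by auto

lemma loops2:
  assumes "btgt A = 2" "(Mid 0, a) \<in> stack_conn B A" "(Mid 1, b) \<in> stack_conn B A"
    "a \<notin> range Mid" "b \<notin> range Mid"
  shows "brauer_loops B A = 0"
proof (rule loops0)
  show "\<forall>j<btgt A. \<exists>x. (Mid j, x) \<in> stack_conn B A \<and> x \<notin> range Mid"
  proof (intro allI impI)
    fix j assume "j < btgt A"
    then have "j = 0 \<or> j = 1" using assms(1) by auto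
    then show "\<exists>x. (Mid j, x) \<in> stack_conn B A \<and> x \<notin> range Mid" using assms by auto
  qed
qed

lemma loops1:
  assumes "btgt A = 1" "(Mid 0, a) \<in> stack_conn B A" "a \<notin> range Mid"
  shows "brauer_loops B A = 0"
proof (rule loops0)
  show "\<forall>j<btgt A. \<exists>x. (Mid j, x) \<in> stack_conn B A \<and> x \<notin> range Mid"
    using assms by auto
qed

lemma cXX: "brauer_comp bX bX = bI2"
  apply (rule comp_intro)
  apply (rule bI2_def)
  apply (simp add: bX_def)
  apply (simp add: bX_def)
  apply (rule bp22)
  subgoal for p q by (elim insertE emptyE; simp add: scXX outer_pt_def)
  subgoal by auto
  subgoal by simp
  done

lemma cII: "brauer_comp bI bI = bI"
  apply (rule comp_intro)
  apply (rule bI_def)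
  apply (simp add: bI_def)
  apply (simp add: bI_def)
  apply (rule bp11)
  subgoal for p q by (elim insertE emptyE; simp add: scII outer_pt_def)
  subgoal by auto
  subgoal by simp
  done

lemma cI2X: "brauer_comp bI2 bX = bX"
  apply (rule comp_intro)
  apply (rule bX_def)
  apply (simp add: bX_def)
  apply (simp add: bI2_def)
  apply (rule bp22)
  subgoal for p q by (elim insertE emptyE; simp add: scI2X outer_pt_def)
  subgoal by auto
  subgoal by simp
  done

lemma cXE: "brauer_comp bX bE = bE"
  apply (rule comp_intro)
  apply (rule bE_def)
  apply (simp add: bE_def)
  apply (simp add: bX_def)
  apply (rule bp22)
  subgoal for p q by (elim insertE emptyE; simp add: scXE outer_pt_def)
  subgoal by auto
  subgoal by simp
  done

lemma cEX: "brauer_comp bE bX = bE"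
  apply (rule comp_intro)
  apply (rule bE_def)
  apply (simp add: bX_def)
  apply (simp add: bE_def)
  apply (rule bp22)
  subgoal for p q by (elim insertE emptyE; simp add: scEX outer_pt_def)
  subgoal by auto
  subgoal by simp
  done

lemma ccc: "brauer_comp bcup bcap = bE"
  apply (rule comp_intro)
  apply (rule bE_def)
  apply (simp add: bcap_def)
  apply (simp add: bcup_def)
  apply (rule bp22)
  subgoal for p q by (elim insertE emptyE; simp add: sccc outer_pt_def)
  subgoal by auto
  subgoal by simp
  done

lemma lXX: "brauer_loops bX bX = 0"
  by (rule loops2[where a="Bot 1" and b="Bot 0"], simp add: bX_def, simp_all add: scXX image_iff)

lemma lII: "brauer_loops bI bI = 0"
  by (rule loops1[where a="Bot 0"], simp add: bI_def, simp_all add: scII image_iff)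

lemma lI2X: "brauer_loops bI2 bX = 0"
  by (rule loops2[where a="Bot 1" and b="Bot 0"], simp add: bX_def, simp_all add: scI2X image_iff)

lemma lXE: "brauer_loops bX bE = 0"
  by (rule loops2[where a="Top 0" and b="Top 0"], simp add: bE_def, simp_all add: scXE image_iff)

lemma lEX: "brauer_loops bE bX = 0"
  by (rule loops2[where a="Bot 0" and b="Bot 0"], simp add: bX_def, simp_all add: scEX image_iff)

lemma lcc: "brauer_loops bcup bcap = 0"
  by (rule loops0) (simp add: bcap_def)



lemma alg:
  fixes cmp :: "'m::ab_group_add \<Rightarrow> 'm \<Rightarrow> 'm"
  assumes assoc: "\<And>x y z. cmp (cmp x y) z = cmp x (cmp y z)"
    and addl: "\<And>x y z. cmp (x + y) z = cmp x z + cmp y z"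
    and addr: "\<And>x y z. cmp x (y + z) = cmp x y + cmp x z"
    and XX: "cmp X X = P" and AP: "cmp A P = A" and PA: "cmp P A = A" and PX: "cmp P X = X"
    and XE: "cmp X E = E" and EX: "cmp E X = E"
    and ii: "cmp A (cmp (cmp X A) X + (X - E)) - cmp (cmp (cmp X A) X + (X - E)) A = 0"
  shows "cmp (A + cmp (cmp X A) X) (X - E) - cmp (X - E) (A + cmp (cmp X A) X) = 0"
proof -
  have diffl: "cmp (x - y) z = cmp x z - cmp y z" for x y z
    using addl[of "x - y" y z] by (simp add: eq_diff_eq)
  have diffr: "cmp z (x - y) = cmp z x - cmp z y" for x y z
    using addr[of z "x - y" y] by (simp add: eq_diff_eq)
  have z1: "cmp 0 z = 0" for z using diffl[of 0 0 z] by simp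
  have z2: "cmp z 0 = 0" for z using diffr[of z 0 0] by simp
  have XXw: "cmp X (cmp X w) = cmp P w" for w using assoc[of X X w] XX by simp
  have APw: "cmp A (cmp P w) = cmp A w" for w using assoc[of A P w] AP by simp
  have PAw: "cmp P (cmp A w) = cmp A w" for w using assoc[of P A w] PA by simp
  have PXw: "cmp P (cmp X w) = cmp X w" for w using assoc[of P X w] PX by simp
  have XEw: "cmp X (cmp E w) = cmp E w" for w using assoc[of X E w] XE by simp
  have EXw: "cmp E (cmp X w) = cmp E w" for w using assoc[of E X w] EX by simp
  define L where "L = cmp A (cmp (cmp X A) X + (X - E)) - cmp (cmp (cmp X A) X + (X - E)) A"
  have h2: "cmp X (cmp L X) = 0" using ii by (simp add: L_def z1 z2)
  have eq: "cmp (A + cmp (cmp X A) X) (X - E) - cmp (X - E) (A + cmp (cmp X A) X) = L + cmp X (cmp L X)"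
    unfolding L_def
    by (simp add: assoc addl addr diffl diffr XX AP PA PX XE EX XXw APw PAw PXw XEw EXw algebra_simps)
  show ?thesis using eq ii h2 L_def by simp
qed



theorem lemma2p10:
  fixes \<delta> :: "'k::comm_ring_1"
    and smul :: "'k \<Rightarrow> 'm::ab_group_add \<Rightarrow> 'm"
    and cmp :: "'m \<Rightarrow> 'm \<Rightarrow> 'm"
    and act :: "'m \<Rightarrow> bdiag \<Rightarrow> 'm"
    and I0 H :: 'm
  assumes "polar_brauer_model \<delta> smul cmp act I0 H"
  shows "commutator cmp (pb_H01 act H + pb_H02 cmp act I0 H) (pb_H12 \<delta> smul act I0) = 0"
proof -
  note M = assms[unfolded polar_brauer_model_def]
  have md: "module smul" using M by (elim conjE) simp
  have one: "smul 1 x = x" for x using module.scale_one[OF md] .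
  have assoc: "\<And>x y z. cmp (cmp x y) z = cmp x (cmp y z)" using M by (elim conjE) simp
  have addl: "\<And>x y z. cmp (x + y) z = cmp x z + cmp y z" using M by (elim conjE) simp
  have addr: "\<And>x y z. cmp x (y + z) = cmp x y + cmp x z" using M by (elim conjE) simp
  have actt: "\<And>x B C. is_brauer B \<Longrightarrow> is_brauer C \<Longrightarrow> act (act x B) C = act x (brauer_tensor B C)"
    using M by (elim conjE) simp
  have r1: "\<And>A B. is_brauer A \<Longrightarrow> is_brauer B \<Longrightarrow> btgt A = bsrc B \<Longrightarrow>
         cmp (act I0 B) (act I0 A) = smul (\<delta> ^ brauer_loops B A) (act I0 (brauer_comp B A))"
    using M by (elim conjE) simp
  have r2: "\<And>A B. is_brauer A \<Longrightarrow> is_brauer B \<Longrightarrow> btgt A = bsrc B \<Longrightarrow>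
         cmp (act H B) (act (pb_Ir act I0 1) A) = smul (\<delta> ^ brauer_loops B A) (act H (brauer_comp B A))"
    using M by (elim conjE) simp
  have r3: "\<And>A B. is_brauer A \<Longrightarrow> is_brauer B \<Longrightarrow> btgt A = bsrc B \<Longrightarrow>
         cmp (act (pb_Ir act I0 1) B) (act H A) = smul (\<delta> ^ brauer_loops B A) (act H (brauer_comp B A))"
    using M by (elim conjE) simp
  have ii: "commutator cmp (pb_H01 act H) (pb_H02 cmp act I0 H + pb_H12 \<delta> smul act I0) = 0"
    using M by (elim conjE) simp
  have t_bE_bX: "btgt bE = bsrc bX" by (simp add: bX_def bE_def)
  have t_bI_bI: "btgt bI = bsrc bI" by (simp add: bI_def)
  have t_bX_bE: "btgt bX = bsrc bE" by (simp add: bX_def bE_def)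
  have t_bX_bI2: "btgt bX = bsrc bI2" by (simp add: bX_def bI2_def)
  have t_bX_bX: "btgt bX = bsrc bX" by (simp add: bX_def)
  define X where "X = act I0 bX"
  define A where "A = act H bI"
  define E where "E = act I0 bE"
  define P where "P = act I0 bI2"
  have I1: "pb_Ir act I0 1 = act I0 bI" by (simp only: pb_Ir_def bId1)
  have P2: "P = act (pb_Ir act I0 1) bI" unfolding P_def I1 using actt[OF br_I br_I] tII by simp
  have XX: "cmp X X = P" unfolding X_def P_def
    using r1[OF br_X br_X t_bX_bX] by (simp add: cXX lXX one)
  have PX: "cmp P X = X" unfolding X_def P_def
    using r1[OF br_X br_I2 t_bX_bI2] by (simp add: cI2X lI2X one)
  have XE: "cmp X E = E" unfolding X_def E_def
    using r1[OF br_E br_X t_bE_bX] by (simp add: cXE lXE one)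
  have EX: "cmp E X = E" unfolding X_def E_def
    using r1[OF br_X br_E t_bX_bE] by (simp add: cEX lEX one)
  have AP: "cmp A P = A" unfolding A_def P2
    using r2[OF br_I br_I t_bI_bI] by (simp add: cII lII one)
  have PA: "cmp P A = A" unfolding A_def P2
    using r3[OF br_I br_I t_bI_bI] by (simp add: cII lII one)
  have H01: "pb_H01 act H = A" by (simp add: pb_H01_def A_def)
  have H02: "pb_H02 cmp act I0 H = cmp (cmp X A) X" by (simp add: pb_H02_def pb_X0_def X_def H01)
  have H12: "pb_H12 \<delta> smul act I0 = X - E" by (simp add: pb_H12_def X_def E_def ccc lcc one)
  show ?thesis
    using alg[of cmp X P A E, OF assoc addl addr XX AP PA PX XE EX] ii
    unfolding H01 H02 H12 commutator_def by simp
qed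

end
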